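(* Let $S$ be a set of bilabelled graphs such that for every $(K,\mathbf{a},\mathbf{b})\in S$ every vertex of $K$ occurs among the entries of $\mathbf{a}$ or $\mathbf{b}$. Let $\langle \mathbf{P}_{\mathrm{gt}},S\rangle$ denote the graph category generated by $S\cup\{\mathbf{P}_{\mathrm{gt}}\}$. Then $\langle \mathbf{P}_{\mathrm{gt}},S\rangle$ is a group-theoretical graph category. Consequently, $\langle \mathbf{P}_{\mathrm{gt}},S\rangle$ equals the group-theoretical graph category generated by $S$ (the smallest group-theoretical graph category containing $S$).
   Context: Graphs are finite, undirected, without multiple edges, loops allowed, considered up to isomorphism; $N_k$ is the edgeless graph on $k$ vertices. Bilabelled graph: $(K,\mathbf{a},\mathbf{b})$ with $K$ a graph, $\mathbf{a}\in V(K)^k$ (inputs), $\mathbf{b}\in V(K)^l$ (outputs), up to isomorphism of $K$ preserving the tuples. Operations: tensor product $(K,\mathbf{a},\mathbf{b})\otimes(H,\mathbf{c},\mathbf{d})=(K\sqcup H,\mathbf{a}\mathbf{c},\mathbf{b}\mathbf{d})$; composition (for $|\mathbf{b}|=|\mathbf{c}|$) $(H,\mathbf{c},\mathbf{d})\cdot(K,\mathbf{a},\mathbf{b})=(H\cdot K,\mathbf{a},\mathbf{d})$ where $H\cdot K$ is obtained from $K\sqcup H$ by identifying $b_i$ with $c_i$ for all $i$ (ignoring edge multiplicities); involution $(K,\mathbf{a},\mathbf{b})^*=(K,\mathbf{b},\mathbf{a})$. For a partition $\pi$ of $V(K)$, $K/\pi$ has the blocks as vertices with an edge between two (possibly equal)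 blocks iff $K$ has an edge between some of their elements, $q_\pi$ the quotient map, and $(K,\mathbf{a},\mathbf{b})/\pi:=(K/\pi,q_\pi(\mathbf{a}),q_\pi(\mathbf{b}))$. Let $\mathbf{0}=(N_0,\emptyset,\emptyset)$ and $\mathbf{M}^{k,l}=(M,(v,\dots,v),(v,\dots,v))$ for the one-vertex loopless graph $M$ with vertex $v$ ($k$ inputs, $l$ outputs). A graph category is a set of bilabelled graphs containing $\mathbf{M}^{1,1},\mathbf{M}^{0,2},\mathbf{0}$ and closed under tensor products, compositions and involution; it is group-theoretical if it is also closed under all quotients $\mathbf{K}\mapsto\mathbf{K}/\pi$. $\mathbf{P}_{\mathrm{gt}}$ denotes the bilabelled graph $(N_2,(x,y,y),(y,y,x))$, where $N_2$ has the two vertices $x,y$ and no edges. *)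

theory Defs
  imports Main
begin

text \<open>Vertices are natural numbers; an edge is a
nonempty set of at most two vertices (a singleton is a loop). Bilabelled
graphs are considered up to isomorphism: all notions below are formulated for
iso-closed sets of concrete representatives.\<close>

record blg =
  verts :: "nat set"
  edges :: "nat set set"
  inp :: "nat list"
  outp :: "nat list"

definition wf_blg :: "blg \<Rightarrow> bool" where
  "wf_blg K \<longleftrightarrow> finite (verts K)
     \<and> (\<forall>e\<in>edges K. e \<subseteq> verts K \<and> (card e = 1 \<or> card e = 2))
     \<and> set (inp K) \<subseteq> verts K \<and> set (outp K) \<subseteq> verts K"

definition blg_iso :: "blg \<Rightarrow> blg \<Rightarrow> bool" where
  "blg_iso K H \<longleftrightarrow> (\<exists>f. bij_betw f (verts K) (verts H)
     \<and> edges H = (\<lambda>e. f ` e) ` edges K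
     \<and> inp H = map f (inp K) \<and> outp H = map f (outp K))"

text \<open>Disjoint union: first graph on even, second on odd numbers.\<close>
definition sh0 :: "nat \<Rightarrow> nat" where "sh0 v = 2 * v"
definition sh1 :: "nat \<Rightarrow> nat" where "sh1 v = 2 * v + 1"

definition tensor :: "blg \<Rightarrow> blg \<Rightarrow> blg" where
  "tensor K H = \<lparr> verts = sh0 ` verts K \<union> sh1 ` verts H,
     edges = (\<lambda>e. sh0 ` e) ` edges K \<union> (\<lambda>e. sh1 ` e) ` edges H,
     inp = map sh0 (inp K) @ map sh1 (inp H),
     outp = map sh0 (outp K) @ map sh1 (outp H) \<rparr>"

definition involution :: "blg \<Rightarrow> blg" where
  "involution K = K\<lparr> inp := outp K, outp := inp K \<rparr>"

text \<open>Quotient by an equivalence relation r on the vertex set: each block is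
represented by its least element.\<close>
definition qmap :: "nat rel \<Rightarrow> nat \<Rightarrow> nat" where
  "qmap r v = Min (r `` {v})"

definition quotient_blg :: "blg \<Rightarrow> nat rel \<Rightarrow> blg" where
  "quotient_blg K r = \<lparr> verts = qmap r ` verts K,
     edges = (\<lambda>e. qmap r ` e) ` edges K,
     inp = map (qmap r) (inp K), outp = map (qmap r) (outp K) \<rparr>"

text \<open>Composition H \<cdot> K (outputs of K glued to inputs of H).\<close>
definition compose :: "blg \<Rightarrow> blg \<Rightarrow> blg" where
  "compose H K =
    (let U = \<lparr> verts = sh0 ` verts K \<union> sh1 ` verts H,
              edges = (\<lambda>e. sh0 ` e) ` edges K \<union> (\<lambda>e. sh1 ` e) ` edges H,
              inp = map sh0 (inp K), outp = map sh1 (outp H) \<rparr>;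
         P = set (zip (map sh0 (outp K)) (map sh1 (inp H)));
         r = (Id_on (verts U) \<union> P \<union> P\<inverse>)\<^sup>*
     in quotient_blg U r)"

definition blg0 :: blg where
  "blg0 = \<lparr> verts = {}, edges = {}, inp = [], outp = [] \<rparr>"

definition M11 :: blg where
  "M11 = \<lparr> verts = {0}, edges = {}, inp = [0], outp = [0] \<rparr>"

definition M02 :: blg where
  "M02 = \<lparr> verts = {0}, edges = {}, inp = [], outp = [0, 0] \<rparr>"

definition Pgt :: blg where
  "Pgt = \<lparr> verts = {0, 1}, edges = {}, inp = [0, 1, 1], outp = [1, 1, 0] \<rparr>"

definition graph_category :: "blg set \<Rightarrow> bool" where
  "graph_category C \<longleftrightarrow>
     (\<forall>K\<in>C. wf_blg K)
   \<and> (\<forall>K\<in>C. \<forall>H. wf_blg H \<longrightarrow> blg_iso K H \<longrightarrow> H \<in> C)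
   \<and> M11 \<in> C \<and> M02 \<in> C \<and> blg0 \<in> C
   \<and> (\<forall>K\<in>C. \<forall>H\<in>C. tensor K H \<in> C)
   \<and> (\<forall>K\<in>C. \<forall>H\<in>C. length (outp K) = length (inp H) \<longrightarrow> compose H K \<in> C)
   \<and> (\<forall>K\<in>C. involution K \<in> C)"

definition gt_graph_category :: "blg set \<Rightarrow> bool" where
  "gt_graph_category C \<longleftrightarrow> graph_category C
   \<and> (\<forall>K\<in>C. \<forall>r. equiv (verts K) r \<longrightarrow> quotient_blg K r \<in> C)"

definition generated_cat :: "blg set \<Rightarrow> blg set" where
  "generated_cat S = \<Inter> {C. graph_category C \<and> S \<subseteq> C}"

definition generated_gt_cat :: "blg set \<Rightarrow> blg set" where
  "generated_gt_cat S = \<Inter> {C. gt_graph_category C \<and> S \<subseteq> C}"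

end

theory Submission
  imports Defs
begin
definition img :: "(nat \<Rightarrow> nat) \<Rightarrow> blg \<Rightarrow> blg" where
  "img f K = \<lparr> verts = f ` verts K, edges = (\<lambda>e. f ` e) ` edges K,
     inp = map f (inp K), outp = map f (outp K) \<rparr>"

lemma blg_eqI:
  fixes K H :: blg
  shows "verts K = verts H \<Longrightarrow> edges K = edges H \<Longrightarrow> inp K = inp H \<Longrightarrow> outp K = outp H \<Longrightarrow> K = H"
  by (cases K; cases H) simp

lemma img_id[simp]: "img id K = K"
  by (rule blg_eqI) (simp_all add: img_def)

lemma img_id'[simp]: "img (\<lambda>x. x) K = K"
  using img_id[of K] by (simp add: id_def)

lemma img_img: "img g (img f K) = img (g \<circ> f) K"
  by (simp add: img_def image_image)

lemma img_cong: "(\<And>x. g x = f x) \<Longrightarrow> img g K = img f K"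
  by (metis ext)

lemma img_upd_outp: "img f (K\<lparr>outp := os\<rparr>) = (img f K)\<lparr>outp := map f os\<rparr>"
  by (simp add: img_def)

lemma img_upd_io: "img f (K\<lparr>inp := a, outp := os\<rparr>) = (img f K)\<lparr>inp := map f a, outp := map f os\<rparr>"
  by (simp add: img_def)

lemma quotient_img: "quotient_blg K r = img (qmap r) K"
  by (simp add: quotient_blg_def img_def)

lemma wf_img: assumes "wf_blg K" shows "wf_blg (img f K)"
proof -
  have "card (f ` e) = 1 \<or> card (f ` e) = 2" if "e \<in> edges K" for e
  proof -
    from assms that have fe: "finite e" "card e = 1 \<or> card e = 2"
      unfolding wf_blg_def by (auto intro: finite_subset)
    then have ne: "e \<noteq> {}" by auto
    have "card (f ` e) \<le> card e" using fe card_image_le by blast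
    moreover have "card (f ` e) \<ge> 1" using ne fe
      by (metis One_nat_def Suc_leI card_gt_0_iff finite_imageI image_is_empty)
    ultimately show ?thesis using fe(2) by linarith
  qed
  with assms show ?thesis unfolding wf_blg_def img_def by auto
qed

lemma iso_img: assumes "inj_on f (verts K)" shows "blg_iso K (img f K)"
  unfolding blg_iso_def img_def using assms by (auto simp: bij_betw_def)

lemma iso_trans: assumes "blg_iso K H" "blg_iso H G" shows "blg_iso K G"
proof -
  from assms(1) obtain f where f: "bij_betw f (verts K) (verts H)" "edges H = (\<lambda>e. f ` e) ` edges K"
    "inp H = map f (inp K)" "outp H = map f (outp K)"
    unfolding blg_iso_def by blast
  from assms(2) obtain g where g: "bij_betw g (verts H) (verts G)" "edges G = (\<lambda>e. g ` e) ` edges H"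
    "inp G = map g (inp H)" "outp G = map g (outp H)"
    unfolding blg_iso_def by blast
  show ?thesis unfolding blg_iso_def
    by (rule exI[of _ "g \<circ> f"]) (auto simp: f g bij_betw_trans[OF f(1) g(1)] image_image image_comp)
qed

lemma iso_sym: assumes "blg_iso K H" "wf_blg K" shows "blg_iso H K"
proof -
  from assms obtain f where f: "bij_betw f (verts K) (verts H)" "edges H = (\<lambda>e. f ` e) ` edges K"
    "inp H = map f (inp K)" "outp H = map f (outp K)"
    unfolding blg_iso_def by blast
  define g where "g = inv_into (verts K) f"
  have gb: "bij_betw g (verts H) (verts K)" using f(1) g_def bij_betw_inv_into by blast
  have gf: "g (f x) = x" if "x \<in> verts K" for x
    using f(1) that g_def bij_betw_inv_into_left by fastforce
  have ge: "g ` f ` e = e" if "e \<subseteq> verts K" for e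
    using gf that by (force simp: image_image)
  have es: "\<forall>e\<in>edges K. e \<subseteq> verts K" using assms(2) unfolding wf_blg_def by blast
  have "edges K = (\<lambda>e. g ` e) ` edges H"
    using es ge by (force simp: f(2) image_image)
  moreover have "inp K = map g (inp H)" "outp K = map g (outp H)"
    using assms(2) gf unfolding f wf_blg_def by (auto simp: map_idI subset_iff)
  ultimately show ?thesis unfolding blg_iso_def using gb by blast
qed

lemma wf_iso: assumes "blg_iso K H" "wf_blg K" shows "wf_blg H"
proof -
  from assms obtain f where f: "bij_betw f (verts K) (verts H)" "edges H = (\<lambda>e. f ` e) ` edges K"
    "inp H = map f (inp K)" "outp H = map f (outp K)"
    unfolding blg_iso_def by blast
  have "H = img f K" by (rule blg_eqI) (use f in \<open>auto simp: img_def bij_betw_def\<close>)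
  then show ?thesis using wf_img assms(2) by simp
qed

lemma iso_kernel:
  assumes "wf_blg K" "\<forall>x\<in>verts K. \<forall>y\<in>verts K. f x = f y \<longleftrightarrow> g x = g y"
  shows "blg_iso (img f K) (img g K)"
proof -
  define \<phi> where "\<phi> = g \<circ> inv_into (verts K) f"
  have ph: "\<phi> (f x) = g x" if "x \<in> verts K" for x
  proof -
    have "inv_into (verts K) f (f x) \<in> verts K" "f (inv_into (verts K) f (f x)) = f x"
      using that by (auto intro: inv_into_into f_inv_into_f)
    then show ?thesis using assms(2) that unfolding \<phi>_def by auto
  qed
  have "inj_on \<phi> (f ` verts K)"
    using ph assms(2) by (auto simp: inj_on_def)
  moreover have "\<phi> ` f ` verts K = g ` verts K"
    using ph by (simp add: image_image)
  ultimately have b: "bij_betw \<phi> (f ` verts K) (g ` verts K)"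
    by (simp add: bij_betw_def)
  have es: "\<forall>e\<in>edges K. e \<subseteq> verts K" "set (inp K) \<subseteq> verts K" "set (outp K) \<subseteq> verts K"
    using assms(1) unfolding wf_blg_def by blast+
  have e: "\<phi> ` f ` e = g ` e" if "e \<subseteq> verts K" for e
    using that ph by (simp add: image_image subset_iff)
  have e2: "(\<lambda>e. g ` e) ` edges K = (\<lambda>e. \<phi> ` e) ` (\<lambda>e. f ` e) ` edges K"
    unfolding image_image using ph es(1) by (intro image_cong) (auto simp: subset_iff)
  have l1: "map g (inp K) = map \<phi> (map f (inp K))" "map g (outp K) = map \<phi> (map f (outp K))"
    using es(2,3) ph by (auto simp: subset_iff)
  show ?thesis unfolding blg_iso_def
    by (rule exI[of _ \<phi>]) (simp add: b e2 l1 img_def)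
qed

lemma sh_simps[simp]: "sh0 x = sh0 y \<longleftrightarrow> x = y" "sh1 x = sh1 y \<longleftrightarrow> x = y"
  "sh0 x \<noteq> sh1 y" "sh1 y \<noteq> sh0 x" "sh0 x div 2 = x" "sh1 x div 2 = x"
  "even (sh0 x)" "odd (sh1 x)" "\<not> odd (sh0 x)" "\<not> even (sh1 x)"
  unfolding sh0_def sh1_def by presburger+

lemma inj_sh[simp]: "inj sh0" "inj sh1"
  by (auto intro: injI)

lemma card_sh[simp]: "card (sh0 ` e) = card e" "card (sh1 ` e) = card e"
  by (auto intro!: card_image inj_onI)

lemma even_cases_sh: obtains (0) x where "z = sh0 x" | (1) x where "z = sh1 x"
  unfolding sh0_def sh1_def by (metis oddE evenE)

lemma qmap_eq_iff:
  assumes "sym r" "trans r" "(x,x) \<in> r" "(y,y) \<in> r" "finite (r``{x})" "finite (r``{y})"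
  shows "qmap r x = qmap r y \<longleftrightarrow> (x,y) \<in> r"
proof
  assume "(x,y) \<in> r"
  then have "r``{x} = r``{y}" using assms(1,2) unfolding sym_def trans_def by blast
  then show "qmap r x = qmap r y" unfolding qmap_def by simp
next
  assume q: "qmap r x = qmap r y"
  have "qmap r x \<in> r``{x}" "qmap r y \<in> r``{y}" unfolding qmap_def
    using assms(3-6) by (intro Min_in; blast)+
  then have "(x, qmap r x) \<in> r" "(y, qmap r x) \<in> r" using q by auto
  then show "(x,y) \<in> r" using assms(1,2) by (meson symD transD)
qed

lemma rtrancl_sym_on:
  fixes V :: "nat set"
  assumes "finite V" "P \<subseteq> V \<times> V"
  defines "r \<equiv> (Id_on V \<union> P \<union> P\<inverse>)\<^sup>*"
  shows "sym r" "trans r" "(x,x) \<in> r" "finite (r``{x})" "(x,y) \<in> r \<Longrightarrow> x = y \<or> y \<in> V"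
proof -
  show "sym r" unfolding r_def by (rule sym_rtrancl) (auto simp: sym_def)
  show "trans r" unfolding r_def by (rule trans_rtrancl)
  show "(x,x) \<in> r" unfolding r_def by simp
  have *: "x = y \<or> y \<in> V" if "(x,y) \<in> r" for y
    using that unfolding r_def by (induct rule: rtrancl_induct) (use assms(2) in auto)
  then show "(x,y) \<in> r \<Longrightarrow> x = y \<or> y \<in> V" by blast
  have "r``{x} \<subseteq> insert x V" using * by auto
  then show "finite (r``{x})" using assms(1) finite_subset by blast
qed

lemma qmap_kernel:
  fixes V :: "nat set"
  assumes "finite V" "P \<subseteq> V \<times> V"
  shows "qmap ((Id_on V \<union> P \<union> P\<inverse>)\<^sup>*) x = qmap ((Id_on V \<union> P \<union> P\<inverse>)\<^sup>*) y
     \<longleftrightarrow> (x,y) \<in> (Id_on V \<union> P \<union> P\<inverse>)\<^sup>*"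
  using rtrancl_sym_on[OF assms] by (intro qmap_eq_iff) auto

definition cU :: "blg \<Rightarrow> blg \<Rightarrow> blg" where
  "cU H K = \<lparr> verts = sh0 ` verts K \<union> sh1 ` verts H,
              edges = (\<lambda>e. sh0 ` e) ` edges K \<union> (\<lambda>e. sh1 ` e) ` edges H,
              inp = map sh0 (inp K), outp = map sh1 (outp H) \<rparr>"

definition cP :: "blg \<Rightarrow> blg \<Rightarrow> (nat \<times> nat) set" where
  "cP H K = set (zip (map sh0 (outp K)) (map sh1 (inp H)))"

definition cR :: "blg \<Rightarrow> blg \<Rightarrow> (nat \<times> nat) set" where
  "cR H K = (Id_on (verts (cU H K)) \<union> cP H K \<union> (cP H K)\<inverse>)\<^sup>*"

lemma compose_alt: "compose H K = img (qmap (cR H K)) (cU H K)"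
  unfolding compose_def cU_def cP_def cR_def Let_def quotient_img by simp

lemma wf_cU: assumes "wf_blg K" "wf_blg H" shows "wf_blg (cU H K)"
  using assms unfolding wf_blg_def cU_def by (auto simp: image_mono subset_iff)

lemma cP_sub: assumes "wf_blg K" "wf_blg H"
  shows "cP H K \<subseteq> verts (cU H K) \<times> verts (cU H K)"
proof
  fix p assume "p \<in> cP H K"
  then obtain i where i: "i < length (outp K)" "i < length (inp H)"
    "p = (sh0 (outp K ! i), sh1 (inp H ! i))"
    unfolding cP_def set_zip by auto
  have "outp K ! i \<in> set (outp K)" "inp H ! i \<in> set (inp H)" using i by simp_all
  then have "outp K ! i \<in> verts K" "inp H ! i \<in> verts H"
    using assms unfolding wf_blg_def by blast+
  then show "p \<in> verts (cU H K) \<times> verts (cU H K)" using i unfolding cU_def by simp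
qed

lemma cR_props: assumes "wf_blg K" "wf_blg H"
  shows "sym (cR H K)" "trans (cR H K)" "(x,x) \<in> cR H K"
  and "qmap (cR H K) x = qmap (cR H K) y \<longleftrightarrow> (x,y) \<in> cR H K"
proof -
  have f: "finite (verts (cU H K))" using wf_cU[OF assms] unfolding wf_blg_def by blast
  note R = rtrancl_sym_on[OF f cP_sub[OF assms]]
  show "sym (cR H K)" "trans (cR H K)" "(x,x) \<in> cR H K" using R unfolding cR_def by auto
  show "qmap (cR H K) x = qmap (cR H K) y \<longleftrightarrow> (x,y) \<in> cR H K"
    unfolding cR_def by (rule qmap_kernel[OF f cP_sub[OF assms]])
qed

lemma cR_glue: assumes "i < length (outp K)" "length (outp K) = length (inp H)"
  shows "(sh0 (outp K ! i), sh1 (inp H ! i)) \<in> cR H K"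
    "(sh1 (inp H ! i), sh0 (outp K ! i)) \<in> cR H K"
proof -
  have "(sh0 (outp K ! i), sh1 (inp H ! i)) \<in> cP H K"
    unfolding cP_def set_zip using assms by (auto intro!: exI[of _ i])
  then show "(sh0 (outp K ! i), sh1 (inp H ! i)) \<in> cR H K"
    "(sh1 (inp H ! i), sh0 (outp K ! i)) \<in> cR H K" unfolding cR_def by auto
qed

lemma cR_trans: assumes "wf_blg K" "wf_blg H" "(x,y) \<in> cR H K" "(y,z) \<in> cR H K"
  shows "(x,z) \<in> cR H K"
  using cR_props(2)[OF assms(1,2)] assms(3,4) unfolding trans_def by blast

lemma cR_sym: assumes "wf_blg K" "wf_blg H" "(x,y) \<in> cR H K"
  shows "(y,x) \<in> cR H K"
  using cR_props(1)[OF assms(1,2)] assms(3) unfolding sym_def by blast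

definition img2 :: "(nat \<Rightarrow> nat) \<Rightarrow> (nat \<Rightarrow> nat) \<Rightarrow> blg \<Rightarrow> blg \<Rightarrow> blg" where
  "img2 f h K H = \<lparr> verts = f ` verts K \<union> h ` verts H,
      edges = (\<lambda>e. f ` e) ` edges K \<union> (\<lambda>e. h ` e) ` edges H,
      inp = map f (inp K), outp = map h (outp H) \<rparr>"

definition Fj :: "(nat \<Rightarrow> nat) \<Rightarrow> (nat \<Rightarrow> nat) \<Rightarrow> nat \<Rightarrow> nat" where
  "Fj f h z = (if even z then f (z div 2) else h (z div 2))"

lemma Fj_sh[simp]: "Fj f h (sh0 x) = f x" "Fj f h (sh1 x) = h x"
  by (simp_all add: Fj_def)

lemma img_Fj: "img (Fj f h) (cU H K) = img2 f h K H"
  by (simp add: img_def img2_def cU_def image_Un image_image)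

lemma GL:
  assumes wK: "wf_blg K" and wH: "wf_blg H" and len: "length (outp K) = length (inp H)"
    and compat: "\<forall>i<length (outp K). f (outp K ! i) = h (inp H ! i)"
    and kern: "\<forall>z\<in>verts (cU H K). \<forall>z'\<in>verts (cU H K). Fj f h z = Fj f h z' \<longrightarrow> (z,z') \<in> cR H K"
  shows "blg_iso (compose H K) (img2 f h K H)"
proof -
  have resp: "Fj f h z = Fj f h z'" if "(z,z') \<in> cR H K" for z z'
    using that unfolding cR_def
  proof (induct rule: rtrancl_induct)
    case base then show ?case by simp
  next
    case (step y w)
    have "Fj f h y = Fj f h w"
      using step(2) compat len by (auto simp: cP_def set_zip)
    then show ?case using step(3) by simp
  qed
  have "blg_iso (img (qmap (cR H K)) (cU H K)) (img (Fj f h) (cU H K))"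
  proof (rule iso_kernel[OF wf_cU[OF wK wH]], intro ballI)
    fix x y assume xy: "x \<in> verts (cU H K)" "y \<in> verts (cU H K)"
    show "(qmap (cR H K) x = qmap (cR H K) y) = (Fj f h x = Fj f h y)"
      unfolding cR_props(4)[OF wK wH] using kern xy resp by blast
  qed
  then show ?thesis unfolding compose_alt img_Fj .
qed

lemma GL_sigma:
  assumes wK: "wf_blg K" and wH: "wf_blg H" and len: "length (outp K) = length (inp H)"
    and compat: "\<forall>i<length (outp K). f (outp K ! i) = h (inp H ! i)"
    and sig: "\<forall>z\<in>verts (cU H K). (z, \<sigma> (Fj f h z)) \<in> cR H K"
  shows "blg_iso (compose H K) (img2 f h K H)"
proof (rule GL[OF wK wH len compat], intro ballI impI)
  fix z z' assume "z \<in> verts (cU H K)" "z' \<in> verts (cU H K)" "Fj f h z = Fj f h z'"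
  then show "(z, z') \<in> cR H K" using sig cR_trans[OF wK wH] cR_sym[OF wK wH] by metis
qed

definition pg :: "nat list \<Rightarrow> nat list \<Rightarrow> blg" where
  "pg cs ds = \<lparr> verts = set cs \<union> set ds, edges = {}, inp = cs, outp = ds \<rparr>"

definition idm :: "nat \<Rightarrow> blg" where "idm n = pg [0..<n] [0..<n]"

definition pairs :: "nat list \<Rightarrow> nat list" where
  "pairs ds = concat (map (\<lambda>d. [d,d]) ds)"

lemma pairs_simps[simp]: "pairs [] = []" "pairs (d # ds) = d # d # pairs ds"
  "pairs (xs @ ys) = pairs xs @ pairs ys" "map f (pairs ds) = pairs (map f ds)"
  "rev (pairs ds) = pairs (rev ds)" "set (pairs ds) = set ds" "length (pairs ds) = 2 * length ds"
  unfolding pairs_def by (induct ds) auto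

lemma img_pg: "img f (pg cs ds) = pg (map f cs) (map f ds)"
  unfolding img_def pg_def by (simp add: image_Un)

lemma wf_pg: "wf_blg (pg cs ds)"
  unfolding wf_blg_def pg_def by auto

lemma wf_tensor: "wf_blg K \<Longrightarrow> wf_blg H \<Longrightarrow> wf_blg (tensor K H)"
  unfolding wf_blg_def tensor_def by (auto simp: image_mono subset_iff)

lemma wf_inv: "wf_blg K \<Longrightarrow> wf_blg (involution K)"
  unfolding wf_blg_def involution_def by auto

lemma wf_compose: "wf_blg K \<Longrightarrow> wf_blg H \<Longrightarrow> wf_blg (compose H K)"
  unfolding compose_alt by (rule wf_img, rule wf_cU)

lemma map_nth_comp: "map (\<lambda>i. f (xs ! i)) [0..<length xs] = map f xs"
proof -
  have "map (\<lambda>i. f (xs ! i)) [0..<length xs] = map f (map (\<lambda>i. xs ! i) [0..<length xs])" by simp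
  also have "map (\<lambda>i. xs ! i) [0..<length xs] = xs" by (rule map_nth)
  finally show ?thesis .
qed

lemma GLK:
  assumes wK: "wf_blg K" and wH: "wf_blg H" and len: "length (outp K) = length (inp H)"
    and eH: "edges H = {}" and vH: "verts H \<subseteq> set (inp H)"
    and compat: "map f (outp K) = map h (inp H)"
    and path: "\<forall>x\<in>verts K. (sh0 x, sh0 (f x)) \<in> cR H K"
  shows "blg_iso (compose H K) ((img f K)\<lparr>outp := map h (outp H)\<rparr>)"
proof -
  have c: "\<forall>i<length (outp K). f (outp K ! i) = h (inp H ! i)"
    using compat len by (metis nth_map)
  have sig: "\<forall>z\<in>verts (cU H K). (z, sh0 (Fj f h z)) \<in> cR H K"
  proof
    fix z assume z: "z \<in> verts (cU H K)"
    show "(z, sh0 (Fj f h z)) \<in> cR H K"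
    proof (cases z rule: even_cases_sh)
      case (0 x)
      then show ?thesis using z path unfolding cU_def by auto
    next
      case (1 y)
      then have "y \<in> set (inp H)" using z vH unfolding cU_def by auto
      then obtain i where i: "i < length (inp H)" "y = inp H ! i" by (metis in_set_conv_nth)
      have "outp K ! i \<in> verts K" using wK i len nth_mem unfolding wf_blg_def by (metis subsetD)
      then have "(sh0 (outp K ! i), sh0 (f (outp K ! i))) \<in> cR H K" using path by blast
      moreover have "(sh1 y, sh0 (outp K ! i)) \<in> cR H K" using cR_glue(2)[of i K H] i len by simp
      moreover have "f (outp K ! i) = h y" using c i len by simp
      ultimately show ?thesis using 1 cR_trans[OF wK wH] by auto
    qed
  qed
  have "blg_iso (compose H K) (img2 f h K H)"
    by (rule GL_sigma[OF wK wH len c sig])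
  moreover have "img2 f h K H = (img f K)\<lparr>outp := map h (outp H)\<rparr>"
  proof (rule blg_eqI)
    have "h ` verts H \<subseteq> h ` set (inp H)" using vH by auto
    also have "\<dots> = set (map f (outp K))" using compat by (metis set_map)
    also have "\<dots> \<subseteq> f ` verts K" using wK unfolding wf_blg_def by auto
    finally show "verts (img2 f h K H) = verts ((img f K)\<lparr>outp := map h (outp H)\<rparr>)"
      unfolding img2_def img_def by auto
  qed (simp_all add: img2_def img_def eH)
  ultimately show ?thesis by simp
qed

locale gcat =
  fixes C :: "blg set"
  assumes gc: "graph_category C"
begin

lemma C_wf: "K \<in> C \<Longrightarrow> wf_blg K" using gc unfolding graph_category_def by blast
lemma C_iso: "K \<in> C \<Longrightarrow> blg_iso K H \<Longrightarrow> H \<in> C"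
  using gc wf_iso C_wf unfolding graph_category_def by blast
lemma C_tensor: "K \<in> C \<Longrightarrow> H \<in> C \<Longrightarrow> tensor K H \<in> C"
  using gc unfolding graph_category_def by blast
lemma C_compose: "K \<in> C \<Longrightarrow> H \<in> C \<Longrightarrow> length (outp K) = length (inp H) \<Longrightarrow> compose H K \<in> C"
  using gc unfolding graph_category_def by blast
lemma C_inv: "K \<in> C \<Longrightarrow> involution K \<in> C"
  using gc unfolding graph_category_def by blast
lemma C_M11: "M11 \<in> C" and C_M02: "M02 \<in> C" and C_blg0: "blg0 \<in> C"
  using gc unfolding graph_category_def by blast+

lemma idm_C: "idm n \<in> C"
proof (induct n)
  case 0
  have "idm 0 = blg0" unfolding idm_def pg_def blg0_def by simp
  then show ?case using C_blg0 by simp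
next
  case (Suc n)
  have t: "tensor (idm n) M11 \<in> C" using Suc C_tensor C_M11 by blast
  define \<phi> where "\<phi> z = (if odd z then n else z div 2)" for z
  have tt: "tensor (idm n) M11 = pg (map sh0 [0..<n] @ [1]) (map sh0 [0..<n] @ [1])"
    unfolding tensor_def idm_def pg_def M11_def by (simp add: sh1_def)
  have m: "map \<phi> (map sh0 [0..<n] @ [1]) = [0..<Suc n]"
    by (simp add: \<phi>_def map_idI)
  have inj: "inj_on \<phi> (verts (tensor (idm n) M11))"
    unfolding tt pg_def by (auto simp: \<phi>_def inj_on_def sh0_def)
  have "img \<phi> (tensor (idm n) M11) = idm (Suc n)"
  proof -
    have "img \<phi> (tensor (idm n) M11) = pg (map \<phi> (map sh0 [0..<n] @ [1])) (map \<phi> (map sh0 [0..<n] @ [1]))"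
      by (simp only: tt img_pg)
    also have "\<dots> = idm (Suc n)" by (simp only: m idm_def)
    finally show ?thesis .
  qed
  then show ?case using C_iso[OF t iso_img[OF inj]] by simp
qed

lemma LocalOp:
  assumes L: "L \<in> C" and Q: "pg cs ds \<in> C" and dc: "set ds \<subseteq> set cs"
    and oL: "outp L = xs @ bs @ ys" and lb: "length bs = length cs"
    and cg: "map gq cs = map f bs"
    and hop: "\<forall>x\<in>verts L. f x = x \<or> (\<exists>i<length cs. \<exists>j<length cs. cs!i = cs!j \<and> bs!i = x \<and> bs!j = f x)"
  shows "(img f L)\<lparr>outp := map f xs @ map gq ds @ map f ys\<rparr> \<in> C"
proof -
  define p where "p = length xs"
  define q where "q = length ys"
  define R where "R = tensor (tensor (idm p) (pg cs ds)) (idm q)"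
  have RC: "R \<in> C" unfolding R_def using idm_C Q C_tensor by blast
  have iR: "inp R = map sh0 (map sh0 [0..<p] @ map sh1 cs) @ map sh1 [0..<q]"
    and oR: "outp R = map sh0 (map sh0 [0..<p] @ map sh1 ds) @ map sh1 [0..<q]"
    and vR: "verts R = sh0 ` (sh0 ` {0..<p} \<union> sh1 ` (set cs \<union> set ds)) \<union> sh1 ` {0..<q}"
    and eR: "edges R = {}"
    unfolding R_def tensor_def idm_def pg_def by simp_all
  define h where "h z = (if odd z then f (ys ! (z div 2)) else if odd (z div 2) then gq (z div 2 div 2)
     else f (xs ! (z div 2 div 2)))" for z
  have hR: "map h (inp R) = map f xs @ map gq cs @ map f ys"
    unfolding iR by (simp add: h_def p_def q_def map_nth_comp comp_def)
  have hO: "map h (outp R) = map f xs @ map gq ds @ map f ys"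
    unfolding oR by (simp add: h_def p_def q_def map_nth_comp comp_def)
  have wL: "wf_blg L" and wR: "wf_blg R" using L RC C_wf by auto
  have len: "length (outp L) = length (inp R)" unfolding oL iR using lb p_def q_def by simp
  have vsub: "verts R \<subseteq> set (inp R)" unfolding vR iR using dc by auto
  have compat: "map f (outp L) = map h (inp R)" unfolding hR oL using cg by simp
  have path: "\<forall>x\<in>verts L. (sh0 x, sh0 (f x)) \<in> cR R L"
  proof
    fix x assume x: "x \<in> verts L"
    show "(sh0 x, sh0 (f x)) \<in> cR R L"
    proof (cases "f x = x")
      case True then show ?thesis using cR_props(3)[OF wL wR] by simp
    next
      case False
      then obtain i j where ij: "i < length cs" "j < length cs" "cs!i = cs!j" "bs!i = x" "bs!j = f x"
        using hop x by blast
      have A: "outp L ! (p + k) = bs ! k" "inp R ! (p + k) = sh0 (sh1 (cs ! k))" "p + k < length (outp L)"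
        if "k < length cs" for k
        using that lb unfolding oL iR p_def by (simp_all add: nth_append)
      have "(sh0 x, sh1 (inp R ! (p+i))) \<in> cR R L" using cR_glue(1)[OF A(3)[OF ij(1)] len] A ij by simp
      moreover have "(sh1 (inp R ! (p+i)), sh0 (f x)) \<in> cR R L"
        using cR_glue(2)[OF A(3)[OF ij(2)] len] A ij by simp
      ultimately show ?thesis using cR_trans[OF wL wR] by blast
    qed
  qed
  have "blg_iso (compose R L) ((img f L)\<lparr>outp := map h (outp R)\<rparr>)"
    by (rule GLK[OF wL wR len eR vsub compat path])
  moreover have "compose R L \<in> C" using C_compose[OF L RC len] .
  ultimately show ?thesis using C_iso hO by simp
qed

end

lemma Pgt_pg: "Pgt = pg [0,1,1] [1,1,0]" unfolding Pgt_def pg_def by auto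
lemma Pgt_inv_pg: "involution Pgt = pg [1,1,0] [0,1,1]" unfolding Pgt_def pg_def involution_def by auto
lemma M02_pg: "M02 = pg [] [0,0]" unfolding M02_def pg_def by auto
lemma M20_pg: "involution M02 = pg [0,0] []" unfolding M02_def pg_def involution_def by auto
lemma inv_pg: "involution (pg cs ds) = pg ds cs" unfolding pg_def involution_def by auto

locale gcp = gcat +
  assumes PgtC: "Pgt \<in> C"
begin

lemma bend1:
  assumes MC: "M \<in> C" and iM: "inp M = a @ [x]"
  shows "M\<lparr>inp := a, outp := outp M @ [x]\<rparr> \<in> C"
proof -
  define n where "n = length a"
  define K where "K = tensor (idm n) M02"
  define H where "H = tensor M M11"
  have KC: "K \<in> C" unfolding K_def using idm_C C_M02 C_tensor by blast
  have HC: "H \<in> C" unfolding H_def using MC C_M11 C_tensor by blast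
  have wK: "wf_blg K" and wH: "wf_blg H" and wM: "wf_blg M" using KC HC MC C_wf by auto
  have vK: "verts K = sh0 ` {0..<n} \<union> {sh1 0}" and eK: "edges K = {}"
    and iK: "inp K = map sh0 [0..<n]" and oK: "outp K = map sh0 [0..<n] @ [sh1 0, sh1 0]"
    unfolding K_def tensor_def idm_def pg_def M02_def by auto
  have vH: "verts H = sh0 ` verts M \<union> {sh1 0}" and eH: "edges H = (\<lambda>e. sh0 ` e) ` edges M"
    and iH: "inp H = map sh0 (a @ [x]) @ [sh1 0]" and oH: "outp H = map sh0 (outp M) @ [sh1 0]"
    unfolding H_def tensor_def M11_def iM by auto
  define f where "f z = (if even z then a ! (z div 2) else x)" for z
  define h where "h z = (if even z then z div 2 else x)" for z
  have len: "length (outp K) = length (inp H)" unfolding oK iH n_def by simp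
  have cm: "map f (outp K) = map h (inp H)"
    unfolding oK iH by (simp add: f_def h_def n_def map_nth_comp comp_def map_nth)
  then have compat: "\<forall>i<length (outp K). f (outp K ! i) = h (inp H ! i)"
    using len by (metis nth_map)
  have gl: "(sh0 (outp K ! i), sh1 (inp H ! i)) \<in> cR H K" "(sh1 (inp H ! i), sh0 (outp K ! i)) \<in> cR H K"
    if "i < n + 2" for i using cR_glue[of i K H] that len unfolding oK by auto
  have oKn: "outp K ! i = sh0 i" "inp H ! i = sh0 (a ! i)" if "i < n" for i
    using that unfolding oK iH n_def by (auto simp: nth_append)
  have oKn2: "outp K ! n = sh1 0" "inp H ! n = sh0 x" "outp K ! (n+1) = sh1 0" "inp H ! (n+1) = sh1 0"
    unfolding oK iH n_def by (auto simp: nth_append)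
  have sig: "\<forall>z\<in>verts (cU H K). (z, sh1 (sh0 (Fj f h z))) \<in> cR H K"
  proof
    fix z assume z: "z \<in> verts (cU H K)"
    then consider (a) i where "i < n" "z = sh0 (sh0 i)" | (b) "z = sh0 (sh1 0)"
      | (c) y where "z = sh1 (sh0 y)" | (d) "z = sh1 (sh1 0)"
      unfolding cU_def vK vH by auto
    then show "(z, sh1 (sh0 (Fj f h z))) \<in> cR H K"
    proof cases
      case (a i)
      then show ?thesis using gl(1)[of i] oKn[of i] by (simp add: f_def)
    next
      case b
      then show ?thesis using gl(1)[of n] oKn2 by (simp add: f_def)
    next
      case (c y)
      then show ?thesis using cR_props(3)[OF wK wH] by (simp add: h_def)
    next
      case d
      have "(z, sh0 (sh1 0)) \<in> cR H K" using gl(2)[of "n+1"] oKn2 d by simp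
      moreover have "(sh0 (sh1 0), sh1 (sh0 x)) \<in> cR H K" using gl(1)[of n] oKn2 by simp
      ultimately show ?thesis using d cR_trans[OF wK wH] by (simp add: h_def)
    qed
  qed
  have iso: "blg_iso (compose H K) (img2 f h K H)" by (rule GL_sigma[OF wK wH len compat sig])
  have ax: "set a \<subseteq> verts M" "x \<in> verts M" using wM iM unfolding wf_blg_def by auto
  have "img2 f h K H = M\<lparr>inp := a, outp := outp M @ [x]\<rparr>"
  proof (rule blg_eqI)
    have "f ` sh0 ` {0..<n} = (\<lambda>i. a ! i) ` {0..<length a}" unfolding image_image by (simp add: f_def n_def)
    also have "\<dots> = set a" by (metis list.set_map map_nth set_upt)
    finally have "f ` verts K = set a \<union> {x}" unfolding vK by (simp add: f_def)
    moreover have "h ` verts H = verts M \<union> {x}" unfolding vH image_Un image_image by (simp add: h_def)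
    ultimately show "verts (img2 f h K H) = verts (M\<lparr>inp := a, outp := outp M @ [x]\<rparr>)"
      using ax unfolding img2_def by auto
    have hs: "h (sh0 y) = y" for y by (simp add: h_def)
    have "(\<lambda>e. h ` e) ` (\<lambda>e. sh0 ` e) ` edges M = edges M"
      by (simp add: image_image hs)
    then show "edges (img2 f h K H) = edges (M\<lparr>inp := a, outp := outp M @ [x]\<rparr>)"
      unfolding img2_def eK eH by simp
    show "inp (img2 f h K H) = inp (M\<lparr>inp := a, outp := outp M @ [x]\<rparr>)"
      unfolding img2_def iK by (simp add: f_def n_def map_nth_comp comp_def map_nth)
    show "outp (img2 f h K H) = outp (M\<lparr>inp := a, outp := outp M @ [x]\<rparr>)"
      unfolding img2_def oH by (simp add: h_def comp_def)
  qed
  moreover have "compose H K \<in> C" using C_compose[OF KC HC len] .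
  ultimately show ?thesis using iso C_iso by simp
qed

lemma unbend1:
  assumes MC: "M \<in> C" and oM: "outp M = b @ [x]"
  shows "M\<lparr>inp := inp M @ [x], outp := b\<rparr> \<in> C"
proof -
  have "involution M \<in> C" using C_inv MC by blast
  moreover have "inp (involution M) = b @ [x]" using oM by (simp add: involution_def)
  ultimately have "(involution M)\<lparr>inp := b, outp := outp (involution M) @ [x]\<rparr> \<in> C"
    by (rule bend1)
  then have "involution ((involution M)\<lparr>inp := b, outp := outp (involution M) @ [x]\<rparr>) \<in> C"
    using C_inv by blast
  then show ?thesis by (simp add: involution_def)
qed

lemma bend_all:
  "M \<in> C \<Longrightarrow> inp M = a @ e \<Longrightarrow> M\<lparr>inp := a, outp := outp M @ rev e\<rparr> \<in> C"
proof (induct e arbitrary: M rule: rev_induct)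
  case Nil
  then show ?case by (cases M) simp
next
  case (snoc x e)
  have "M\<lparr>inp := a @ e, outp := outp M @ [x]\<rparr> \<in> C" using bend1[of M "a @ e" x] snoc(2,3) by simp
  from snoc(1)[OF this] show ?case by simp
qed

lemma unbend_all:
  "M \<in> C \<Longrightarrow> outp M = b @ rev e \<Longrightarrow> M\<lparr>inp := inp M @ e, outp := b\<rparr> \<in> C"
proof (induct e arbitrary: M)
  case Nil
  then show ?case by (cases M) simp
next
  case (Cons x e)
  have "M\<lparr>inp := inp M @ [x], outp := b @ rev e\<rparr> \<in> C"
    using unbend1[of M "b @ rev e" x] Cons(2,3) by simp
  from Cons(1)[OF this] show ?case by simp
qed

lemma LocalOp_id:
  assumes L: "L \<in> C" and Q: "pg cs ds \<in> C" and dc: "set ds \<subseteq> set cs"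
    and oL: "outp L = xs @ map gq cs @ ys"
  shows "L\<lparr>outp := xs @ map gq ds @ ys\<rparr> \<in> C"
  using LocalOp[OF L Q dc oL, where f = id and gq = gq] by simp

lemma M33: "pg [0,0,0] [0,0,0] \<in> C"
proof -
  have wP: "wf_blg Pgt" using PgtC C_wf by blast
  have len: "length (outp Pgt) = length (inp Pgt)" by (simp add: Pgt_def)
  have path: "\<forall>x\<in>verts Pgt. (sh0 x, sh0 ((\<lambda>_. 0) x)) \<in> cR Pgt Pgt"
  proof
    fix x assume "x \<in> verts Pgt"
    then have "x = 0 \<or> x = 1" by (simp add: Pgt_def)
    moreover have "(sh0 1, sh1 1) \<in> cR Pgt Pgt" using cR_glue(1)[of 1 Pgt Pgt] by (simp add: Pgt_def)
    moreover have "(sh1 1, sh0 0) \<in> cR Pgt Pgt" using cR_glue(2)[of 2 Pgt Pgt] by (simp add: Pgt_def)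
    ultimately show "(sh0 x, sh0 ((\<lambda>_. 0) x)) \<in> cR Pgt Pgt"
      using cR_props(3)[OF wP wP] cR_trans[OF wP wP] by auto
  qed
  have "blg_iso (compose Pgt Pgt) ((img (\<lambda>_. 0) Pgt)\<lparr>outp := map (\<lambda>_. 0) (outp Pgt)\<rparr>)"
    by (rule GLK[OF wP wP len _ _ _ path]) (auto simp: Pgt_def)
  moreover have "(img (\<lambda>_. 0) Pgt)\<lparr>outp := map (\<lambda>_. 0) (outp Pgt)\<rparr> = pg [0,0,0] [0,0,0]"
    by (simp add: img_def Pgt_def pg_def)
  moreover have "compose Pgt Pgt \<in> C" using C_compose[OF PgtC PgtC len] .
  ultimately show ?thesis using C_iso by metis
qed

lemma M20C: "pg [0,0] [] \<in> C" using C_inv[OF C_M02] M20_pg by simp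

lemma M06: "pg [] [0,0,0,0,0,0] \<in> C"
  using bend_all[OF M33, of "[]" "[0,0,0]"] by (simp add: pg_def)

lemma M04: "pg [] [0,0,0,0] \<in> C"
  using LocalOp_id[OF M06 M20C, of "[0,0,0,0]" "\<lambda>_. 0" "[]"] by (simp add: pg_def)

lemma M13: "pg [0] [0,0,0] \<in> C"
  using unbend_all[OF M04, of "[0,0,0]" "[0]"] by (simp add: pg_def)

lemma M22: "pg [0,0] [0,0] \<in> C"
  using unbend_all[OF M13, of "[0,0]" "[0]"] by (simp add: pg_def)

lemma M31: "pg [0,0,0] [0] \<in> C"
  using C_inv[OF M13] by (simp add: inv_pg)

lemma op_left:
  "L \<in> C \<Longrightarrow> outp L = xs @ [x,y,y] @ ys \<Longrightarrow> L\<lparr>outp := xs @ [y,y,x] @ ys\<rparr> \<in> C"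
  using LocalOp_id[of L "[0,1,1]" "[1,1,0]" xs "\<lambda>i. if i = 0 then x else y" ys] PgtC
  by (simp add: Pgt_pg)

lemma op_right:
  "L \<in> C \<Longrightarrow> outp L = xs @ [y,y,x] @ ys \<Longrightarrow> L\<lparr>outp := xs @ [x,y,y] @ ys\<rparr> \<in> C"
  using LocalOp_id[of L "[1,1,0]" "[0,1,1]" xs "\<lambda>i. if i = 0 then x else y" ys] C_inv[OF PgtC]
  by (simp add: Pgt_inv_pg)

lemma op_triple:
  "L \<in> C \<Longrightarrow> outp L = xs @ [x] @ ys \<Longrightarrow> L\<lparr>outp := xs @ [x,x,x] @ ys\<rparr> \<in> C"
  using LocalOp_id[of L "[0]" "[0,0,0]" xs "\<lambda>i. x" ys] M13 by simp

lemma op_untriple: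
  "L \<in> C \<Longrightarrow> outp L = xs @ [x,x,x] @ ys \<Longrightarrow> L\<lparr>outp := xs @ [x] @ ys\<rparr> \<in> C"
  using LocalOp_id[of L "[0,0,0]" "[0]" xs "\<lambda>i. x" ys] M31 by simp

lemma op_cap:
  "L \<in> C \<Longrightarrow> outp L = xs @ [x,x] @ ys \<Longrightarrow> L\<lparr>outp := xs @ ys\<rparr> \<in> C"
  using LocalOp_id[of L "[0,0]" "[]" xs "\<lambda>i. x" ys] M20C by simp

lemma op_merge:
  assumes "L \<in> C" "outp L = xs @ [u,v] @ ys"
  shows "img (\<lambda>z. if z = v then u else z) L \<in> C"
proof -
  define m where "m = (\<lambda>z. if z = v then u else z)"
  have hop: "\<forall>x\<in>verts L. m x = x \<or> (\<exists>i<length [0::nat,0]. \<exists>j<length [0::nat,0]. [0::nat,0]!i = [0::nat,0]!j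
       \<and> [u,v]!i = x \<and> [u,v]!j = m x)"
  proof
    fix x show "m x = x \<or> (\<exists>i<length [0::nat,0]. \<exists>j<length [0::nat,0]. [0::nat,0]!i = [0::nat,0]!j
       \<and> [u,v]!i = x \<and> [u,v]!j = m x)"
    proof (cases "x = v")
      case True
      show ?thesis
        by (rule disjI2, rule exI[of _ "1::nat"], rule conjI, simp, rule exI[of _ "0::nat"])
          (simp add: m_def True)
    qed (simp add: m_def)
  qed
  have "(img m L)\<lparr>outp := map m xs @ map (\<lambda>_. u) [0::nat,0] @ map m ys\<rparr> \<in> C"
    by (rule LocalOp[where f = m and gq = "\<lambda>_. u" and L = L and cs = "[0,0]" and ds = "[0,0]"
        and xs = xs and bs = "[u,v]" and ys = ys], rule assms(1), rule M22, simp, rule assms(2), simp,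
        simp add: m_def, rule hop)
  moreover have "map m xs @ map (\<lambda>_. u) [0::nat,0] @ map m ys = map m (outp L)"
    using assms(2) by (simp add: m_def)
  ultimately show ?thesis unfolding m_def[symmetric] by (simp add: img_def)
qed

end

lemma upd_outp_same[simp]: "outp K = b \<Longrightarrow> K\<lparr>outp := b\<rparr> = K"
  by (cases K) auto

lemma upd_io_same[simp]: "inp K = a \<Longrightarrow> outp K = b \<Longrightarrow> K\<lparr>inp := a, outp := b\<rparr> = K"
  by (cases K) auto

context gcp
begin

lemma pass_right_list:
  "L \<in> C \<Longrightarrow> outp L = xs @ [d,d] @ zs @ ys \<Longrightarrow> L\<lparr>outp := xs @ zs @ [d,d] @ ys\<rparr> \<in> C"
proof (induct zs arbitrary: L xs)
  case Nil
  then show ?case by simp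
next
  case (Cons z zs)
  have "L\<lparr>outp := xs @ [z,d,d] @ (zs @ ys)\<rparr> \<in> C"
    using op_right[OF Cons(2), of xs d z "zs @ ys"] Cons(3) by simp
  from Cons(1)[OF this, of "xs @ [z]"] show ?case by simp
qed

lemma pass_left_list:
  "L \<in> C \<Longrightarrow> outp L = xs @ zs @ [d,d] @ ys \<Longrightarrow> L\<lparr>outp := xs @ [d,d] @ zs @ ys\<rparr> \<in> C"
proof (induct zs arbitrary: L xs)
  case Nil
  then show ?case by simp
next
  case (Cons z zs)
  have "L\<lparr>outp := (xs @ [z]) @ [d,d] @ zs @ ys\<rparr> \<in> C"
    using Cons(1)[OF Cons(2), of "xs @ [z]"] Cons(3) by simp
  from op_left[OF this, of xs z d "zs @ ys"] show ?case by simp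
qed

lemma pairs_right:
  "L \<in> C \<Longrightarrow> outp L = xs @ pairs ds @ zs @ ys \<Longrightarrow> L\<lparr>outp := xs @ zs @ pairs ds @ ys\<rparr> \<in> C"
proof (induct ds arbitrary: L xs)
  case Nil
  then show ?case by simp
next
  case (Cons d ds)
  have "L\<lparr>outp := (xs @ [d,d]) @ zs @ pairs ds @ ys\<rparr> \<in> C"
    using Cons(1)[OF Cons(2), of "xs @ [d,d]"] Cons(3) by simp
  from pass_right_list[OF this, of xs d zs "pairs ds @ ys"] show ?case by simp
qed

lemma triple_collect:
  "M \<in> C \<Longrightarrow> outp M = pre @ zs @ T \<Longrightarrow> M\<lparr>outp := pre @ zs @ T @ pairs zs\<rparr> \<in> C"
proof (induct zs arbitrary: M pre T)
  case Nil
  then show ?case by simp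
next
  case (Cons z zs)
  have "M\<lparr>outp := pre @ [z,z,z] @ (zs @ T)\<rparr> \<in> C"
    using op_triple[OF Cons(2), of pre z "zs @ T"] Cons(3) by simp
  from pass_right_list[OF this, of "pre @ [z]" z "zs @ T" "[]"]
  have "M\<lparr>outp := (pre @ [z]) @ zs @ (T @ [z,z])\<rparr> \<in> C" by simp
  then have "(M\<lparr>outp := (pre @ [z]) @ zs @ (T @ [z,z])\<rparr>)\<lparr>outp := (pre @ [z]) @ zs @ (T @ [z,z]) @ pairs zs\<rparr> \<in> C"
    by (rule Cons(1)) simp
  then show ?case by simp
qed

lemma cap_pairs:
  "L \<in> C \<Longrightarrow> outp L = b @ pairs ds \<Longrightarrow> L\<lparr>outp := b\<rparr> \<in> C"
proof (induct ds arbitrary: L rule: rev_induct)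
  case Nil
  then show ?case by simp
next
  case (snoc d ds)
  have "L\<lparr>outp := (b @ pairs ds) @ []\<rparr> \<in> C"
    using op_cap[OF snoc(2), of "b @ pairs ds" d "[]"] snoc(3) by simp
  from snoc(1)[OF this] show ?case by simp
qed

lemma merge_out:
  assumes LC: "L \<in> C" and oL: "outp L = xs @ [u] @ zs @ [v] @ ys"
  shows "img (\<lambda>z. if z = v then u else z) L \<in> C"
proof -
  define m where "m = (\<lambda>z. if z = v then u else z)"
  have mu: "m u = u" "m v = u" by (simp_all add: m_def)
  have L1: "L\<lparr>outp := (xs @ [u] @ zs) @ [v,v,v] @ ys\<rparr> \<in> C"
    using op_triple[OF LC, of "xs @ [u] @ zs" v ys] oL by simp
  have L2: "L\<lparr>outp := (xs @ [u]) @ [v,v] @ zs @ ([v] @ ys)\<rparr> \<in> C"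
    using pass_left_list[OF L1, of "xs @ [u]" zs v "[v] @ ys"] by simp
  have L3: "img m (L\<lparr>outp := xs @ [u,v] @ (v # zs @ [v] @ ys)\<rparr>) \<in> C"
    using op_merge[OF L2, of xs u v "v # zs @ [v] @ ys"] by (simp add: m_def)
  then have L3': "(img m L)\<lparr>outp := (map m xs @ [u]) @ [u,u] @ map m zs @ ([u] @ map m ys)\<rparr> \<in> C"
    by (simp add: img_upd_outp mu)
  have L4: "(img m L)\<lparr>outp := (map m xs @ [u] @ map m zs) @ [u,u,u] @ map m ys\<rparr> \<in> C"
    using pass_right_list[OF L3', of "map m xs @ [u]" u "map m zs" "[u] @ map m ys"] by simp
  have "(img m L)\<lparr>outp := (map m xs @ [u] @ map m zs) @ [u] @ map m ys\<rparr> \<in> C"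
    using op_untriple[OF L4, of "map m xs @ [u] @ map m zs" u "map m ys"] by simp
  moreover have "(map m xs @ [u] @ map m zs) @ [u] @ map m ys = outp (img m L)"
    using oL mu by (simp add: img_def)
  ultimately show ?thesis unfolding m_def[symmetric] by simp
qed

lemma merge_any:
  assumes LC: "L \<in> C" and u: "u \<in> set (outp L)" and v: "v \<in> set (outp L)" and uv: "u \<noteq> v"
  shows "img (\<lambda>z. if z = v then u else z) L \<in> C \<or> img (\<lambda>z. if z = u then v else z) L \<in> C"
proof -
  obtain o1 o2 where o: "outp L = o1 @ u # o2" using u split_list by metis
  then have "v \<in> set o1 \<or> v \<in> set o2" using v uv by auto
  then show ?thesis
  proof
    assume "v \<in> set o1"
    then obtain o3 o4 where "o1 = o3 @ v # o4" using split_list by metis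
    then have "outp L = o3 @ [v] @ o4 @ [u] @ o2" using o by simp
    then show ?thesis using merge_out[OF LC] by blast
  next
    assume "v \<in> set o2"
    then obtain o3 o4 where "o2 = o3 @ v # o4" using split_list by metis
    then have "outp L = o1 @ [u] @ o3 @ [v] @ o4" using o by simp
    then show ?thesis using merge_out[OF LC] by blast
  qed
qed

lemma lemmaA_out:
  "L \<in> C \<Longrightarrow> verts L \<subseteq> set (outp L) \<Longrightarrow> img f L \<in> C"
proof (induct "card (verts L)" arbitrary: L rule: less_induct)
  case less
  have fin: "finite (verts L)" using C_wf[OF less(2)] unfolding wf_blg_def by blast
  show ?case
  proof (cases "inj_on f (verts L)")
    case True
    then show ?thesis using C_iso[OF less(2) iso_img] by blast
  next
    case False
    then obtain u v where uv: "u \<in> verts L" "v \<in> verts L" "u \<noteq> v" "f u = f v"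
      unfolding inj_on_def by blast
    have uo: "u \<in> set (outp L)" "v \<in> set (outp L)" using uv less(3) by auto
    have "\<exists>a b. a \<in> verts L \<and> b \<in> verts L \<and> a \<noteq> b \<and> f a = f b \<and>
       img (\<lambda>z. if z = b then a else z) L \<in> C"
    proof (cases "img (\<lambda>z. if z = v then u else z) L \<in> C")
      case True
      then show ?thesis using uv by blast
    next
      case False
      then have "img (\<lambda>z. if z = u then v else z) L \<in> C" using merge_any[OF less(2) uo uv(3)] by blast
      then show ?thesis using uv by (intro exI[of _ v] exI[of _ u]) auto
    qed
    then obtain a b where ab: "a \<in> verts L" "b \<in> verts L" "a \<noteq> b" "f a = f b"
      and L1: "img (\<lambda>z. if z = b then a else z) L \<in> C" by blast
    define m where "m = (\<lambda>z. if z = b then a else z)"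
    have L1': "img m L \<in> C" using L1 m_def by simp
    have vm: "verts (img m L) \<subseteq> verts L - {b}"
      using ab by (auto simp: img_def m_def)
    have "card (verts (img m L)) < card (verts L)"
      by (rule le_less_trans[OF card_mono[OF _ vm]]) (use fin card_Diff1_less[OF fin ab(2)] in auto)
    moreover have "verts (img m L) \<subseteq> set (outp (img m L))"
      using less(3) by (auto simp: img_def)
    ultimately have "img f (img m L) \<in> C" using less(1) L1' by blast
    moreover have "f \<circ> m = f" using ab by (auto simp: m_def)
    ultimately show ?thesis by (simp add: img_img)
  qed
qed

lemma lemmaA:
  assumes LC: "L \<in> C" and fl: "verts L \<subseteq> set (inp L) \<union> set (outp L)"
  shows "img f L \<in> C"
proof -
  have F: "L\<lparr>inp := [], outp := outp L @ rev (inp L)\<rparr> \<in> C"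
    using bend_all[OF LC, of "[]" "inp L"] by simp
  have "img f (L\<lparr>inp := [], outp := outp L @ rev (inp L)\<rparr>) \<in> C"
    by (rule lemmaA_out[OF F]) (use fl in auto)
  then have "(img f L)\<lparr>inp := [], outp := outp (img f L) @ rev (inp (img f L))\<rparr> \<in> C"
    by (simp add: img_upd_io rev_map img_def)
  from unbend_all[OF this, of "outp (img f L)" "inp (img f L)"] show ?thesis by simp
qed

end

definition fl :: "blg \<Rightarrow> bool" where "fl L \<longleftrightarrow> verts L \<subseteq> set (inp L) \<union> set (outp L)"

definition covers :: "blg \<Rightarrow> blg \<Rightarrow> bool" where
  "covers L K \<longleftrightarrow> fl L \<and> verts L = verts K \<and> edges L = edges K \<and> inp L = inp K
     \<and> (\<exists>ds. outp L = outp K @ pairs ds)"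

lemma drop_map_nth: "length xs = n + m \<Longrightarrow> map (\<lambda>j. g (xs ! (n + j))) [0..<m] = map g (drop n xs)"
  by (rule nth_equalityI) auto

context gcp
begin

definition Dc :: "blg set" where
  "Dc = {K. wf_blg K \<and> (\<exists>L\<in>C. covers L K)}"

lemma DcE: assumes "K \<in> Dc"
  obtains L ds where "L \<in> C" "fl L" "verts L = verts K" "edges L = edges K" "inp L = inp K"
    "outp L = outp K @ pairs ds" "wf_blg K"
  using assms unfolding Dc_def covers_def by blast

lemma DcI: "wf_blg K \<Longrightarrow> L \<in> C \<Longrightarrow> fl L \<Longrightarrow> verts L = verts K \<Longrightarrow> edges L = edges K \<Longrightarrow> inp L = inp K
   \<Longrightarrow> outp L = outp K @ pairs ds \<Longrightarrow> K \<in> Dc"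
  unfolding Dc_def covers_def by blast

lemma Dc_base: "K \<in> C \<Longrightarrow> fl K \<Longrightarrow> K \<in> Dc"
  by (rule DcI[of K K "[]"]) (auto simp: C_wf)

lemma Dc_iso: assumes "K \<in> Dc" "blg_iso K H" "wf_blg H" shows "H \<in> Dc"
proof -
  obtain L ds where L: "L \<in> C" "fl L" "verts L = verts K" "edges L = edges K" "inp L = inp K"
    "outp L = outp K @ pairs ds" using DcE[OF assms(1)] by metis
  from assms(2) obtain \<phi> where p: "bij_betw \<phi> (verts K) (verts H)" "edges H = (\<lambda>e. \<phi> ` e) ` edges K"
    "inp H = map \<phi> (inp K)" "outp H = map \<phi> (outp K)"
    unfolding blg_iso_def by blast
  have "inj_on \<phi> (verts L)" using p(1) L(3) by (simp add: bij_betw_def)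
  then have LC: "img \<phi> L \<in> C" using C_iso[OF L(1) iso_img] by blast
  have vv: "\<phi> ` verts K = verts H" using p(1) by (simp add: bij_betw_def)
  show ?thesis
  proof (rule DcI[OF assms(3) LC, of "map \<phi> ds"])
    show "fl (img \<phi> L)" using L(2) unfolding fl_def img_def by auto
  qed (use L p vv in \<open>simp_all add: img_def\<close>)
qed

lemma Dc_inv: assumes "K \<in> Dc" shows "involution K \<in> Dc"
proof -
  obtain L ds where L: "L \<in> C" "fl L" "verts L = verts K" "edges L = edges K" "inp L = inp K"
    "outp L = outp K @ pairs ds" "wf_blg K" using DcE[OF assms(1)] by metis
  have "(involution L)\<lparr>inp := outp K, outp := outp (involution L) @ rev (pairs ds)\<rparr> \<in> C"
    by (rule bend_all[OF C_inv[OF L(1)]]) (simp add: involution_def L)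
  then show ?thesis
    by (rule DcI[OF wf_inv[OF L(7)], of _ "rev ds"]) (use L in \<open>auto simp: involution_def fl_def\<close>)
qed

lemma Dc_tensor: assumes "K1 \<in> Dc" "K2 \<in> Dc" shows "tensor K1 K2 \<in> Dc"
proof -
  obtain L1 ds1 where L1: "L1 \<in> C" "fl L1" "verts L1 = verts K1" "edges L1 = edges K1" "inp L1 = inp K1"
    "outp L1 = outp K1 @ pairs ds1" "wf_blg K1" using DcE[OF assms(1)] by metis
  obtain L2 ds2 where L2: "L2 \<in> C" "fl L2" "verts L2 = verts K2" "edges L2 = edges K2" "inp L2 = inp K2"
    "outp L2 = outp K2 @ pairs ds2" "wf_blg K2" using DcE[OF assms(2)] by metis
  have T: "tensor L1 L2 \<in> C" using C_tensor L1(1) L2(1) by blast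
  have "outp (tensor L1 L2) = map sh0 (outp K1) @ pairs (map sh0 ds1) @ map sh1 (outp K2) @ pairs (map sh1 ds2)"
    unfolding tensor_def using L1 L2 by simp
  from pairs_right[OF T this]
  have L': "(tensor L1 L2)\<lparr>outp := map sh0 (outp K1) @ map sh1 (outp K2) @ pairs (map sh0 ds1 @ map sh1 ds2)\<rparr> \<in> C"
    by simp
  show ?thesis
    by (rule DcI[OF wf_tensor[OF L1(7) L2(7)] L', of "map sh0 ds1 @ map sh1 ds2"])
      (use L1 L2 in \<open>auto simp: tensor_def fl_def\<close>)
qed

lemma Dc_compose: assumes KD: "K \<in> Dc" and HD: "H \<in> Dc" and len0: "length (outp K) = length (inp H)"
  shows "compose H K \<in> Dc"
proof -
  obtain LK dK where LK: "LK \<in> C" "fl LK" "verts LK = verts K" "edges LK = edges K" "inp LK = inp K"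
    "outp LK = outp K @ pairs dK" "wf_blg K" using DcE[OF KD] by metis
  obtain LH dH where LH: "LH \<in> C" "fl LH" "verts LH = verts H" "edges LH = edges H" "inp LH = inp H"
    "outp LH = outp H @ pairs dH" "wf_blg H" using DcE[OF HD] by metis
  define n where "n = length (outp K)"
  define b where "b = outp K"
  define os where "os = b @ pairs dK @ pairs b"
  define L1 where "L1 = LK\<lparr>outp := os\<rparr>"
  have L1C: "L1 \<in> C" unfolding L1_def os_def b_def
    using triple_collect[OF LK(1), of "[]" "outp K" "pairs dK"] LK(6) by simp
  define m where "m = length (pairs dK @ pairs b)"
  define T where "T = tensor LH (idm m)"
  have TC: "T \<in> C" unfolding T_def using C_tensor LH(1) idm_C by blast
  have iT: "inp T = map sh0 (inp H) @ map sh1 [0..<m]"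
    and oT: "outp T = map sh0 (outp H) @ pairs (map sh0 dH) @ map sh1 [0..<m]"
    and vT: "verts T = sh0 ` verts H \<union> sh1 ` {0..<m}"
    and eT: "edges T = (\<lambda>e. sh0 ` e) ` edges H"
    unfolding T_def tensor_def idm_def pg_def using LH by simp_all
  have oL1: "outp L1 = os" and vL1: "verts L1 = verts K" and eL1: "edges L1 = edges K"
    and iL1: "inp L1 = inp K" unfolding L1_def using LK by simp_all
  have lo: "length os = n + m" unfolding os_def m_def n_def b_def by simp
  have len: "length (outp L1) = length (inp T)" using lo oL1 iT len0 n_def by simp
  have wL1: "wf_blg L1" and wT: "wf_blg T" using L1C TC C_wf by auto
  define L' where "L' = compose T L1"
  have L'C: "L' \<in> C" unfolding L'_def using C_compose[OF L1C TC len] .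
  define q where "q = qmap (cR T L1)"
  have qeq: "q x = q y \<longleftrightarrow> (x,y) \<in> cR T L1" for x y unfolding q_def by (rule cR_props(4)[OF wL1 wT])
  define f where "f x = q (sh0 x)" for x
  define h where "h y = q (sh1 (sh0 y))" for y
  have osn: "os ! i = b ! i" if "i < n" for i using that unfolding os_def n_def b_def by (simp add: nth_append)
  have iTn: "inp T ! i = sh0 (inp H ! i)" if "i < n" for i using that len0 unfolding iT n_def by (simp add: nth_append)
  have iTm: "inp T ! (n + j) = sh1 j" if "j < m" for j using that len0 unfolding iT n_def by (simp add: nth_append)
  have glue: "(sh0 (os ! k), sh1 (inp T ! k)) \<in> cR T L1" if "k < n + m" for k
    using cR_glue(1)[of k L1 T] that len lo oL1 by simp
  have compat: "f (b ! i) = h (inp H ! i)" if "i < n" for i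
    using glue[of i] that osn iTn qeq unfolding f_def h_def by simp
  have idv: "q (sh1 (sh1 j)) = f (os ! (n + j))" if "j < m" for j
    using cR_sym[OF wL1 wT glue[of "n + j"]] that iTm qeq unfolding f_def by simp
  define K' where "K' = img2 f h K H"
  define \<iota> where "\<iota> z = (if even z then z else sh1 (sh0 (z div 2)))" for z :: nat
  define \<pi> where "\<pi> w = (if even w then w else if even (w div 2) then sh1 (w div 2 div 2)
      else sh0 (os ! (n + w div 2 div 2)))" for w :: nat
  have Fi: "Fj f h z = q (\<iota> z)" for z
    by (cases z rule: even_cases_sh) (simp_all add: \<iota>_def f_def h_def)
  have pi_i: "\<pi> (\<iota> z) = z" for z
    by (cases z rule: even_cases_sh) (simp_all add: \<iota>_def \<pi>_def)
  have wK: "wf_blg K" and wH: "wf_blg H" using LK LH by auto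
  have pimap: "(\<pi> x, \<pi> y) \<in> cR H K" if "(x,y) \<in> cR T L1" for x y
    using that unfolding cR_def[of T L1]
  proof (induct rule: rtrancl_induct)
    case base then show ?case using cR_props(3)[OF wK wH] by simp
  next
    case (step y w)
    have "(\<pi> y, \<pi> w) \<in> cR H K"
    proof -
      have one: "(\<pi> (sh0 (os ! k)), \<pi> (sh1 (inp T ! k))) \<in> cR H K" if k: "k < n + m" for k
      proof (cases "k < n")
        case True
        then show ?thesis using cR_glue(1)[of k K H] len0 osn iTn unfolding n_def b_def
          by (simp add: \<pi>_def)
      next
        case False
        then obtain j where j: "k = n + j" "j < m" using k by (metis add_diff_inverse_nat nat_add_left_cancel_less)
        then show ?thesis using iTm[OF j(2)] cR_props(3)[OF wK wH] by (simp add: \<pi>_def)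
      qed
      from step(2) consider "y = w" | "(y, w) \<in> cP T L1" | "(w, y) \<in> cP T L1" by auto
      then show ?thesis
      proof cases
        case 1 then show ?thesis using cR_props(3)[OF wK wH] by simp
      next
        case 2
        then obtain k where "k < n + m" "y = sh0 (os ! k)" "w = sh1 (inp T ! k)"
          unfolding cP_def set_zip using oL1 lo by auto
        then show ?thesis using one by simp
      next
        case 3
        then obtain k where "k < n + m" "w = sh0 (os ! k)" "y = sh1 (inp T ! k)"
          unfolding cP_def set_zip using oL1 lo by auto
        then show ?thesis using one cR_sym[OF wK wH] by blast
      qed
    qed
    then show ?case using step(3) cR_trans[OF wK wH] by blast
  qed
  have iso1: "blg_iso (compose H K) K'"
    unfolding K'_def
  proof (rule GL[OF wK wH len0])
    show "\<forall>i<length (outp K). f (outp K ! i) = h (inp H ! i)" using compat unfolding n_def b_def by simp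
    show "\<forall>z\<in>verts (cU H K). \<forall>z'\<in>verts (cU H K). Fj f h z = Fj f h z' \<longrightarrow> (z, z') \<in> cR H K"
    proof (intro ballI impI)
      fix z z' assume "Fj f h z = Fj f h z'"
      then have "(\<iota> z, \<iota> z') \<in> cR T L1" using Fi qeq by simp
      from pimap[OF this] show "(z, z') \<in> cR H K" by (simp add: pi_i)
    qed
  qed
  have wos: "set os \<subseteq> verts K" using wL1 oL1 vL1 unfolding wf_blg_def by blast
  have dm: "map (\<lambda>j. q (sh1 (sh1 j))) [0..<m] = map f (drop n os)"
  proof -
    have "map (\<lambda>j. q (sh1 (sh1 j))) [0..<m] = map (\<lambda>j. f (os ! (n + j))) [0..<m]"
      using idv by simp
    also have "\<dots> = map f (drop n os)" by (rule drop_map_nth[OF lo])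
    finally show ?thesis .
  qed
  have dos: "drop n os = pairs dK @ pairs b" unfolding os_def n_def b_def by simp
  define ds' where "ds' = map h dH @ map f dK @ map f b"
  have L'eq: "L' = K'\<lparr>outp := outp K' @ pairs ds'\<rparr>"
  proof (rule blg_eqI)
    have A: "q ` sh1 ` sh1 ` {0..<m} \<subseteq> f ` verts K"
    proof
      fix w assume "w \<in> q ` sh1 ` sh1 ` {0..<m}"
      then obtain j where "j < m" "w = q (sh1 (sh1 j))" by auto
      then have "w = f (os ! (n + j))" using idv by simp
      moreover have "os ! (n + j) \<in> verts K" using wos lo \<open>j < m\<close> by (simp add: subset_iff)
      ultimately show "w \<in> f ` verts K" by blast
    qed
    have "verts L' = q ` sh0 ` verts K \<union> q ` sh1 ` sh0 ` verts H \<union> q ` sh1 ` sh1 ` {0..<m}"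
      unfolding L'_def compose_alt q_def[symmetric] cU_def vT vL1 by (simp add: img_def image_Un Un_assoc)
    also have "q ` sh0 ` verts K = f ` verts K" unfolding f_def by (simp add: image_image)
    also have "q ` sh1 ` sh0 ` verts H = h ` verts H" unfolding h_def by (simp add: image_image)
    finally show "verts L' = verts (K'\<lparr>outp := outp K' @ pairs ds'\<rparr>)"
      using A unfolding K'_def img2_def by auto
    show "edges L' = edges (K'\<lparr>outp := outp K' @ pairs ds'\<rparr>)"
      unfolding L'_def compose_alt q_def[symmetric] cU_def eT eL1 K'_def img2_def
      by (simp add: img_def image_Un image_image f_def h_def)
    show "inp L' = inp (K'\<lparr>outp := outp K' @ pairs ds'\<rparr>)"
      unfolding L'_def compose_alt q_def[symmetric] cU_def iL1 K'_def img2_def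
      by (simp add: img_def f_def)
    have "outp L' = map h (outp H) @ pairs (map h dH) @ map (\<lambda>j. q (sh1 (sh1 j))) [0..<m]"
      unfolding L'_def compose_alt q_def[symmetric] cU_def oT
      by (simp add: img_def h_def comp_def h_def[abs_def])
    also have "\<dots> = outp K' @ pairs ds'" unfolding dm dos ds'_def K'_def img2_def by simp
    finally show "outp L' = outp (K'\<lparr>outp := outp K' @ pairs ds'\<rparr>)" by simp
  qed
  have flL': "fl L'"
    unfolding fl_def
  proof
    fix w assume "w \<in> verts L'"
    then have "w \<in> f ` verts K \<union> h ` verts H" unfolding L'eq K'_def img2_def by simp
    then show "w \<in> set (inp L') \<union> set (outp L')"
    proof
      assume "w \<in> f ` verts K"
      then obtain x where x: "x \<in> verts K" "w = f x" by blast
      then have "x \<in> set (inp K) \<or> x \<in> set b \<or> x \<in> set dK" using LK(2,3,5,6) unfolding fl_def b_def by auto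
      then show ?thesis unfolding L'eq K'_def img2_def ds'_def using x by auto
    next
      assume "w \<in> h ` verts H"
      then obtain y where y: "y \<in> verts H" "w = h y" by blast
      then have "y \<in> set (inp H) \<or> y \<in> set (outp H) \<or> y \<in> set dH" using LH(2,3,5,6) unfolding fl_def by auto
      then show ?thesis
      proof (elim disjE)
        assume "y \<in> set (inp H)"
        then obtain i where i: "i < n" "y = inp H ! i" using len0 unfolding n_def by (metis in_set_conv_nth)
        then have "w = f (b ! i)" using compat y by simp
        moreover have "b ! i \<in> set b" using i unfolding n_def b_def by simp
        ultimately show ?thesis unfolding L'eq K'_def img2_def ds'_def by auto
      qed (use y in \<open>auto simp: L'eq K'_def img2_def ds'_def\<close>)
    qed
  qed
  have wC: "wf_blg (compose H K)" by (rule wf_compose[OF wK wH])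
  have wK': "wf_blg K'" using wf_iso[OF iso1 wC] .
  have "K' \<in> Dc"
    by (rule DcI[OF wK' L'C flL', of ds']) (simp_all add: L'eq)
  then show ?thesis using Dc_iso iso_sym[OF iso1 wC] wC by blast
qed

end

context gcp
begin

lemma Dc_gc: "graph_category Dc"
  unfolding graph_category_def
proof (intro conjI ballI allI impI)
  show "M11 \<in> Dc" by (rule Dc_base[OF C_M11]) (simp add: fl_def M11_def)
  show "M02 \<in> Dc" by (rule Dc_base[OF C_M02]) (simp add: fl_def M02_def)
  show "blg0 \<in> Dc" by (rule Dc_base[OF C_blg0]) (simp add: fl_def blg0_def)
next
  fix K assume "K \<in> Dc" then show "wf_blg K" by (rule DcE)
next
  fix K H assume a: "K \<in> Dc" "wf_blg H" "blg_iso K H" show "H \<in> Dc" by (rule Dc_iso[OF a(1) a(3) a(2)])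
next
  fix K H assume "K \<in> Dc" "H \<in> Dc" then show "tensor K H \<in> Dc" by (rule Dc_tensor)
next
  fix K H assume "K \<in> Dc" "H \<in> Dc" "length (outp K) = length (inp H)"
  then show "compose H K \<in> Dc" by (rule Dc_compose)
next
  fix K assume "K \<in> Dc" then show "involution K \<in> Dc" by (rule Dc_inv)
qed

lemma quot_closed: assumes "K \<in> Dc" shows "img g K \<in> C"
proof -
  obtain L ds where L: "L \<in> C" "fl L" "verts L = verts K" "edges L = edges K" "inp L = inp K"
    "outp L = outp K @ pairs ds" "wf_blg K" using DcE[OF assms] by metis
  have "img g L \<in> C" using lemmaA[OF L(1)] L(2) unfolding fl_def by blast
  moreover have "outp (img g L) = map g (outp K) @ pairs (map g ds)" using L(6) by (simp add: img_def)
  ultimately have "(img g L)\<lparr>outp := map g (outp K)\<rparr> \<in> C" by (rule cap_pairs)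
  moreover have "(img g L)\<lparr>outp := map g (outp K)\<rparr> = img g K" using L by (simp add: img_def)
  ultimately show ?thesis by simp
qed

lemma gt_if: "C \<subseteq> Dc \<Longrightarrow> gt_graph_category C"
  unfolding gt_graph_category_def using gc quot_closed by (auto simp: quotient_img)

end

lemma gc_W: "graph_category {K. wf_blg K}"
proof -
  have "wf_blg M11" "wf_blg M02" "wf_blg blg0" unfolding M11_def M02_def blg0_def wf_blg_def by auto
  then show ?thesis unfolding graph_category_def Ball_def mem_Collect_eq
  proof (intro conjI ballI allI impI)
    fix K H assume "wf_blg K" "wf_blg H"
    then show "wf_blg (tensor K H)" by (rule wf_tensor)
  next
    fix K H assume "wf_blg K" "wf_blg H"
    then show "wf_blg (compose H K)" by (rule wf_compose)
  next
    fix K assume "wf_blg K"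
    then show "wf_blg (involution K)" by (rule wf_inv)
  qed
qed

lemma gc_Inter: assumes "\<forall>C\<in>F. graph_category C" "F \<noteq> {}" shows "graph_category (\<Inter>F)"
proof -
  have g: "gcat C" if "C \<in> F" for C using assms that unfolding gcat_def by blast
  obtain C1 where C1: "C1 \<in> F" using assms(2) by blast
  show ?thesis unfolding graph_category_def
  proof (intro conjI ballI allI impI)
    fix K assume "K \<in> \<Inter>F"
    then have "K \<in> C1" using C1 by blast
    then show "wf_blg K" using gcat.C_wf[OF g[OF C1]] by blast
  next
    fix K H assume "K \<in> \<Inter>F" "wf_blg H" "blg_iso K H"
    then show "H \<in> \<Inter>F" using gcat.C_iso[OF g] by blast
  next
    show "M11 \<in> \<Inter>F" using gcat.C_M11[OF g] by blast
    show "M02 \<in> \<Inter>F" using gcat.C_M02[OF g] by blast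
    show "blg0 \<in> \<Inter>F" using gcat.C_blg0[OF g] by blast
  next
    fix K H assume "K \<in> \<Inter>F" "H \<in> \<Inter>F"
    then show "tensor K H \<in> \<Inter>F" using gcat.C_tensor[OF g] by blast
  next
    fix K H assume "K \<in> \<Inter>F" "H \<in> \<Inter>F" "length (outp K) = length (inp H)"
    then show "compose H K \<in> \<Inter>F" using gcat.C_compose[OF g] by blast
  next
    fix K assume "K \<in> \<Inter>F"
    then show "involution K \<in> \<Inter>F" using gcat.C_inv[OF g] by blast
  qed
qed

lemma wf_Pgt: "wf_blg Pgt" unfolding Pgt_def wf_blg_def by auto

lemma Pgt_in_gt: assumes G: "gt_graph_category G" shows "Pgt \<in> G"
proof -
  have gG: "graph_category G" using G unfolding gt_graph_category_def by blast
  have g: "gcat G" using gG unfolding gcat_def .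
  have M02: "M02 \<in> G" and M11: "M11 \<in> G" using gcat.C_M02[OF g] gcat.C_M11[OF g] by blast+
  have M20: "involution M02 \<in> G" using gcat.C_inv[OF g M02] .
  define X where "X = tensor (tensor M02 M11) (involution M02)"
  have XG: "X \<in> G" unfolding X_def using gcat.C_tensor[OF g] M02 M11 M20 by blast
  have X: "X = \<lparr>verts = {0, 2, 1}, edges = {}, inp = [2, 1, 1], outp = [0, 0, 2]\<rparr>"
    unfolding X_def tensor_def M02_def M11_def involution_def by (simp add: sh0_def sh1_def; blast)
  define r :: "nat rel" where "r = {(0,0),(0,1),(1,0),(1,1),(2,2)}"
  have eq: "equiv (verts X) r" unfolding X r_def equiv_def refl_on_def sym_def trans_def by auto
  have QG: "quotient_blg X r \<in> G" using G XG eq unfolding gt_graph_category_def by blast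
  have r0: "r``{0} = {0,1}" and r1: "r``{1} = {0,1}" and r2: "r``{2} = {2}" unfolding r_def by auto
  have q: "qmap r 0 = 0" "qmap r (Suc 0) = 0" "qmap r 2 = 2" unfolding qmap_def r0 r1[simplified] r2 by auto
  have Q: "quotient_blg X r = \<lparr>verts = {0, 2}, edges = {}, inp = [2, 0, 0], outp = [0, 0, 2]\<rparr>"
    unfolding quotient_blg_def X by (simp add: q insert_commute)
  define \<phi> :: "nat \<Rightarrow> nat" where "\<phi> z = (if z = 2 then 0 else 1)" for z
  have "inj_on \<phi> (verts (quotient_blg X r))" unfolding Q by (simp add: \<phi>_def)
  then have "blg_iso (quotient_blg X r) (img \<phi> (quotient_blg X r))" by (rule iso_img)
  moreover have "img \<phi> (quotient_blg X r) = Pgt" unfolding Q Pgt_def img_def by (auto simp: \<phi>_def)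
  ultimately show ?thesis using QG wf_Pgt gcat.C_iso[of G] gG unfolding gcat_def by metis
qed

theorem proposition2p32:
  fixes S :: "blg set"
  assumes "\<forall>K\<in>S. wf_blg K"
    and "\<forall>K\<in>S. verts K \<subseteq> set (inp K) \<union> set (outp K)"
  shows "gt_graph_category (generated_cat (insert Pgt S))
       \<and> generated_cat (insert Pgt S) = generated_gt_cat S"
proof -
  define C0 where "C0 = generated_cat (insert Pgt S)"
  define Fam where "Fam = {C. graph_category C \<and> insert Pgt S \<subseteq> C}"
  have W: "{K. wf_blg K} \<in> Fam" unfolding Fam_def using gc_W assms(1) wf_Pgt by auto
  have gC0: "graph_category C0" unfolding C0_def generated_cat_def Fam_def[symmetric]
    by (rule gc_Inter) (use W in \<open>auto simp: Fam_def\<close>)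
  have sub: "insert Pgt S \<subseteq> C0" unfolding C0_def generated_cat_def by blast
  have gcp: "gcp C0" unfolding gcp_def gcat_def gcp_axioms_def using gC0 sub by blast
  interpret gcp C0 by (rule gcp)
  have "insert Pgt S \<subseteq> Dc"
  proof
    fix K assume K: "K \<in> insert Pgt S"
    have "fl K" using K assms(2) by (auto simp: fl_def Pgt_def)
    then show "K \<in> Dc" using Dc_base K sub by blast
  qed
  then have "Dc \<in> Fam" unfolding Fam_def using Dc_gc by blast
  then have "C0 \<subseteq> Dc" unfolding C0_def generated_cat_def Fam_def[symmetric] by blast
  then have gt: "gt_graph_category C0" by (rule gt_if)
  have "C0 \<subseteq> generated_gt_cat S"
    unfolding generated_gt_cat_def
  proof (rule Inter_greatest)
    fix G assume "G \<in> {C. gt_graph_category C \<and> S \<subseteq> C}"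
    then have G: "gt_graph_category G" "S \<subseteq> G" by auto
    then have "G \<in> Fam" unfolding Fam_def using Pgt_in_gt[OF G(1)] gt_graph_category_def by blast
    then show "C0 \<subseteq> G" unfolding C0_def generated_cat_def Fam_def[symmetric] by blast
  qed
  moreover have "generated_gt_cat S \<subseteq> C0"
    unfolding generated_gt_cat_def using gt sub by blast
  ultimately show ?thesis using gt unfolding C0_def by blast
qed

end
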